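(* Let $F:\mathbb{R}_{\ge0}\to\mathbb{R}_{>0}$ be differentiable with $f=F'$ satisfying $f(x)<0$ for all $x$, and $\lim_{x\to\infty}F(x)=0$. Assume that for every $a\in(0,1)$ the limits $\lim_{x\to\infty}\frac{F(x)}{F(ax)}$ and $\lim_{x\to\infty}\frac{f(x)}{f(ax)}$ exist (in the extended reals). Let $g(x)=-\ln F(x)$. If $g'(x)\in\omega(1/x)$, i.e. $\lim_{x\to\infty}x\,g'(x)=\infty$, then $\lim_{x\to\infty}\frac{f(x)}{f(ax)}=0$ for every $a\in(0,1)$. *)

theory Defs
  imports "HOL-Analysis.Analysis"
begin

end

theory Submission
  imports Defs
begin

theorem lemma2:
  fixes F f :: "real \<Rightarrow> real"
  assumes F_pos: "\<And>x. x \<ge> 0 \<Longrightarrow> F x > 0"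
    and F_deriv: "\<And>x. x \<ge> 0 \<Longrightarrow> (F has_real_derivative f x) (at x within {0..})"
    and f_neg: "\<And>x. x \<ge> 0 \<Longrightarrow> f x < 0"
    and F_lim: "(F \<longlongrightarrow> 0) at_top"
    and lim_F: "\<And>a. a \<in> {0<..<1} \<Longrightarrow>
                  \<exists>L::ereal. ((\<lambda>x. ereal (F x / F (a * x))) \<longlongrightarrow> L) at_top"
    and lim_f: "\<And>a. a \<in> {0<..<1} \<Longrightarrow>
                  \<exists>L::ereal. ((\<lambda>x. ereal (f x / f (a * x))) \<longlongrightarrow> L) at_top"
    and omega: "filterlim (\<lambda>x. x * deriv (\<lambda>t. - ln (F t)) x) at_top at_top"
  shows "\<forall>a \<in> {0<..<1}. ((\<lambda>x. f x / f (a * x)) \<longlongrightarrow> 0) at_top"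
proof
  fix a :: real assume a: "a \<in> {0<..<1}"
  hence a0: "a > 0" and a1: "a < 1" by auto
  have Fd: "(F has_real_derivative f x) (at x)" if "x > 0" for x
  proof -
    have "x \<in> interior {0::real..}" using that by simp
    hence "at x within {0..} = at x" by (rule at_within_interior)
    thus ?thesis using F_deriv[of x] that by simp
  qed
  obtain L where L: "((\<lambda>x. ereal (f x / f (a * x))) \<longlongrightarrow> L) at_top"
    using lim_f[OF a] by blast
  have "0 \<le> L"
  proof (rule tendsto_lowerbound[OF L])
    show "\<forall>\<^sub>F x in at_top. 0 \<le> ereal (f x / f (a * x))"
      using eventually_ge_at_top[of 0]
    proof eventually_elim
      case (elim x) thus ?case using f_neg[of x] f_neg[of "a*x"] a0
        by (simp add: divide_nonpos_neg less_imp_le)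
    qed
  qed simp
  moreover have "L \<le> 0"
  proof (rule ccontr)
    assume "\<not> L \<le> 0"
    hence "0 < L" by simp
    then obtain c where c0: "0 < ereal c" and cL: "ereal c < L" using ereal_dense2 by blast
    hence c0': "c > 0" by simp
    have "\<forall>\<^sub>F x in at_top. ereal c < ereal (f x / f (a * x))"
      using order_tendstoD(1)[OF L cL] .
    then obtain x0 where x0: "\<And>x. x \<ge> x0 \<Longrightarrow> c < f x / f (a * x)"
      unfolding eventually_at_top_linorder by auto
    define y0 where "y0 = max 1 x0"
    have hineq: "F x \<ge> (c/a) * F (a*x)" if "x \<ge> y0" for x
    proof -
      define h where "h t = F t - (c/a) * F (a*t)" for t
      have dec: "h y \<le> h x" if "y \<ge> x" for y
      proof (rule DERIV_nonpos_imp_nonincreasing[OF that])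
        fix t assume t: "x \<le> t" "t \<le> y"
        hence t1: "t \<ge> 1" "t \<ge> x0" using \<open>x \<ge> y0\<close> unfolding y0_def by auto
        have "DERIV h t :> f t - (c/a) * (f (a*t) * a)"
        proof -
          have d1: "DERIV (\<lambda>t. F (a*t)) t :> f (a*t) * a"
            using DERIV_chain2[OF Fd[of "a*t"] DERIV_cmult_Id[of a t]] t1 a0 by simp
          show ?thesis unfolding h_def by (intro DERIV_diff DERIV_cmult Fd d1) (use t1 in simp)
        qed
        moreover have "f t - (c/a) * (f (a*t) * a) \<le> 0"
        proof -
          have fa: "f (a*t) < 0" using f_neg[of "a*t"] a0 t1 by simp
          have "c < f t / f (a*t)" using x0 t1 by simp
          hence "c * f (a*t) > f t" using fa by (simp add: pos_less_divide_eq neg_less_divide_eq)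
          thus ?thesis using a0 by simp
        qed
        ultimately show "\<exists>y. DERIV h t :> y \<and> y \<le> 0" by blast
      qed
      have at: "filterlim (\<lambda>t. a*t) at_top at_top"
        using filterlim_tendsto_pos_mult_at_top[OF tendsto_const a0 filterlim_ident] .
      have "(h \<longlongrightarrow> 0 - (c/a) * 0) at_top"
        unfolding h_def by (intro tendsto_intros F_lim filterlim_compose[OF F_lim at])
      hence hl: "(h \<longlongrightarrow> 0) at_top" by simp
      have ev: "\<forall>\<^sub>F t in at_top. h t \<le> h x"
        using eventually_ge_at_top[of x] by (rule eventually_mono) (rule dec)
      have "0 \<le> h x" using tendsto_upperbound[OF hl ev] by simp
      thus ?thesis unfolding h_def by simp
    qed
    define M where "M = max 1 (ln (c/a) / ln a + 1)"
    have lna: "ln a < 0" using a0 a1 by simp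
    have "M * ln a \<le> (ln (c/a) / ln a + 1) * ln a"
      using lna unfolding M_def by (intro mult_right_mono_neg) auto
    also have "\<dots> = ln (c/a) + ln a" using lna by (simp add: field_simps)
    finally have Mlt: "M * ln a < ln (c/a)" using lna by simp
    obtain x1 where x1: "\<And>x. x \<ge> x1 \<Longrightarrow> M \<le> x * deriv (\<lambda>t. - ln (F t)) x"
      using omega unfolding filterlim_at_top eventually_at_top_linorder by blast
    define y1 where "y1 = max 1 x1"
    have kdec: "ln (F y) + M * ln y \<le> ln (F x) + M * ln x" if "y1 \<le> x" "x \<le> y" for x y
    proof (rule DERIV_nonpos_imp_nonincreasing[OF that(2)])
      fix t assume t: "x \<le> t" "t \<le> y"
      hence t1: "t \<ge> 1" "t \<ge> x1" using that unfolding y1_def by auto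
      have Ft: "F t > 0" using F_pos t1 by simp
      have D0: "DERIV (\<lambda>t. ln (F t)) t :> f t / F t"
        using DERIV_chain2[OF DERIV_ln_divide[OF Ft] Fd[of t]] t1 by simp
      have D1: "DERIV (\<lambda>t. - ln (F t)) t :> - (f t / F t)"
        using DERIV_minus[OF D0] .
      have "deriv (\<lambda>t. - ln (F t)) t = - (f t / F t)" using DERIV_imp_deriv[OF D1] .
      hence "M \<le> t * (- (f t / F t))" using x1[OF t1(2)] by simp
      hence le: "f t / F t + M / t \<le> 0" using t1 by (simp add: field_simps)
      have "DERIV (\<lambda>t. ln (F t) + M * ln t) t :> f t / F t + M / t"
        using DERIV_add[OF D0 DERIV_cmult[OF DERIV_ln_divide, of t M]] t1 by simp
      thus "\<exists>y. DERIV (\<lambda>t. ln (F t) + M * ln t) t :> y \<and> y \<le> 0" using le by blast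
    qed
    define x where "x = max y0 (y1 / a)"
    have y1pos: "y1 \<ge> 1" unfolding y1_def by simp
    have xa: "a * x \<ge> y1" unfolding x_def using a0
      by (simp add: max_def field_simps)
    have "y1 / a \<ge> y1" using a0 a1 y1pos by (simp add: field_simps)
    hence xy0: "x \<ge> y0" and x1': "x \<ge> 1"
      unfolding x_def y0_def by auto
    have axx: "a * x \<le> x" using a1 x1' by (simp add: mult_le_cancel_right1)
    have Fx: "F x > 0" and Fax: "F (a*x) > 0" using F_pos x1' a0 by auto
    have "ln (F x) + M * ln x \<le> ln (F (a*x)) + M * ln (a*x)" using kdec[OF xa axx] .
    also have "ln (a*x) = ln a + ln x" using a0 x1' by (simp add: ln_mult)
    finally have up: "ln (F x) \<le> ln (F (a*x)) + M * ln a" by (simp add: algebra_simps)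
    have "ln ((c/a) * F (a*x)) \<le> ln (F x)" using hineq[OF xy0] Fx Fax c0' a0 by simp
    moreover have "ln ((c/a) * F (a*x)) = ln (c/a) + ln (F (a*x))"
      using Fax c0' a0 by (intro ln_mult_pos) auto
    ultimately have "ln (c/a) + ln (F (a*x)) \<le> ln (F x)" by simp
    with up Mlt show False by simp
  qed
  ultimately have "L = 0" by simp
  with L show "((\<lambda>x. f x / f (a * x)) \<longlongrightarrow> 0) at_top"
    by (simp add: zero_ereal_def lim_ereal)
qed

end
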